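(* If $W$ is a sunword, then $W$ is jump-free.
   Context: Multisuns: a multisun is a graph with no induced $K_4$ minus an edge, of odd order, whose maximal cliques of size $2$ form a Hamiltonian cycle $C$ (the rim); the other maximal cliques consist of pairwise nonconsecutive vertices of $C$ (inscribed cliques). A sub-multisun deletes the edge sets of some, but not all, inscribed cliques. An $AB$-path (inscribed cliques $A,B$, possibly equal) is a subpath of $C$ with one end in $A$, the other in $B$, internal vertices in no inscribed clique; $A$-path $=AA$-path; for $v\in B$ an $Av$-path is an $AB$-path ending at $v$ in $B$. N-conditions: (N1) every $A$-path has an even number $\ge4$ of vertices; (N2) inscribed cliques have odd size; (N3) all inscribed cliques share a vertex $\xi\in V(C)$ and are otherwise disjoint; (N4) every $A\xi$-path has an even number of vertices; (N5) for $A\ne B$ every $AB$-path has an odd number of vertices. A sunoid is a multisun such that it and all its sub-multisuns satisfy the N-conditions. Words: alphabet $\Sigma$ with distinguished letter $\epsilon$; $x^k$ is $k$ copies of $x$. The pattern $\pi(w)$ is obtained by repeatedly deleting $\epsilon\epsilon$. $v\sim w$ if related by cyclic shift and/or reversal; $u\approx v$ iff $\pi(u)\sim\pi(v)$; $[w]$ is the class (cyclic word). For a multisun satisfying the N-conditions, label rim vertices by $\sigma$ (in $\ge2$ inscribed cliques), by a letter specific to $X$ (only in inscribed clique $X$), or $\epsilon$ (in none); reading around the rim gives $w_G$ and $[w_G]$ is its s-word. An s-word is either (i) $[a^\lambda]$ ($\Sigma=\{\epsilon,a\}$, $\lambda$ odd) or (ii) $[\sigma x_{i_1}^{\lambda_1}\epsilon\cdots\epsilon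 x_{i_s}^{\lambda_s}]$ with positive $\lambda_j$, proper letters $x_{i_j}\in\Sigma\setminus\{\epsilon,\sigma\}$, $x_{i_h}\ne x_{i_{h+1}}$, each proper letter's exponents summing to an even number. A sunword is the s-word of a sunoid. Induced order (type (ii)): take a representative $\sigma u$ equal to its own pattern, replace each interval $xx$ of $u$ ($x$ proper) by $x\epsilon\epsilon x$ to get $z$, let $v=\sigma\epsilon\epsilon z\epsilon\epsilon=v_1\cdots v_N$ arranged cyclically; $\sigma$ is least and for proper $x\ne y$, $x\prec y$ iff the least cyclic distance from position $1$ to a position labeled $x$ is smaller than for $y$. Jumps (type (ii)): write $W=[x_{i_0}x_{i_1}^{\lambda_1}\epsilon\cdots\epsilon x_{i_s}^{\lambda_s}]$ with $x_{i_0}=\sigma$. Letters $x\preceq y$ of $\Sigma\setminus\{\epsilon\}$ form a cover pair if no $z\in\Sigma\setminus\{\epsilon\}$, $z\ne x,y$, has $x\prec z\prec y$. A jump is a pair of cyclically consecutive letters $x_{i_h},x_{i_{h+1}}$ ($h=0,\dots,s$, indices mod $s+1$) not forming a cover pair; $W$ is jump-free if it has no jump. An s-word of type (i) has no jumps. *)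

theory Defs
  imports Main
begin

definition sgraph :: "'v set \<Rightarrow> ('v \<Rightarrow> 'v \<Rightarrow> bool) \<Rightarrow> bool" where
  "sgraph V E \<longleftrightarrow> finite V \<and> (\<forall>x y. E x y \<longrightarrow> x \<in> V \<and> y \<in> V \<and> x \<noteq> y \<and> E y x)"

definition clique :: "'v set \<Rightarrow> ('v \<Rightarrow> 'v \<Rightarrow> bool) \<Rightarrow> 'v set \<Rightarrow> bool" where
  "clique V E K \<longleftrightarrow> K \<subseteq> V \<and> (\<forall>x\<in>K. \<forall>y\<in>K. x \<noteq> y \<longrightarrow> E x y)"

definition maxclique :: "'v set \<Rightarrow> ('v \<Rightarrow> 'v \<Rightarrow> bool) \<Rightarrow> 'v set \<Rightarrow> bool" where
  "maxclique V E K \<longleftrightarrow> clique V E K \<and> (\<forall>K'. clique V E K' \<and> K \<subseteq> K' \<longrightarrow> K' = K)"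

definition diamond_free :: "'v set \<Rightarrow> ('v \<Rightarrow> 'v \<Rightarrow> bool) \<Rightarrow> bool" where
  "diamond_free V E \<longleftrightarrow> \<not> (\<exists>a\<in>V. \<exists>b\<in>V. \<exists>c\<in>V. \<exists>d\<in>V. distinct [a,b,c,d] \<and>
      E a b \<and> E a c \<and> E a d \<and> E b c \<and> E b d \<and> \<not> E c d)"

text \<open>Hamiltonian cycle of V, given as a list of its vertices in cyclic order.\<close>
definition cyc_edges :: "'v list \<Rightarrow> 'v set set" where
  "cyc_edges cyc = {{cyc ! i, cyc ! ((i + 1) mod length cyc)} | i. i < length cyc}"

definition is_rim :: "'v set \<Rightarrow> ('v \<Rightarrow> 'v \<Rightarrow> bool) \<Rightarrow> 'v list \<Rightarrow> bool" where
  "is_rim V E cyc \<longleftrightarrow> distinct cyc \<and> set cyc = V \<and> 3 \<le> length cyc \<and>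
      {K. maxclique V E K \<and> card K = 2} = cyc_edges cyc"

definition inscr :: "'v set \<Rightarrow> ('v \<Rightarrow> 'v \<Rightarrow> bool) \<Rightarrow> 'v set set" where
  "inscr V E = {K. maxclique V E K \<and> card K \<noteq> 2}"

definition multisun :: "'v set \<Rightarrow> ('v \<Rightarrow> 'v \<Rightarrow> bool) \<Rightarrow> bool" where
  "multisun V E \<longleftrightarrow> sgraph V E \<and> diamond_free V E \<and> odd (card V) \<and>
     (\<exists>cyc. is_rim V E cyc \<and>
        (\<forall>K\<in>inscr V E. \<forall>i < length cyc.
           \<not> (cyc ! i \<in> K \<and> cyc ! ((i + 1) mod length cyc) \<in> K)))"

text \<open>Sub-multisun: delete the edge sets of the inscribed cliques in D.\<close>
definition subE :: "('v \<Rightarrow> 'v \<Rightarrow> bool) \<Rightarrow> 'v set set \<Rightarrow> 'v \<Rightarrow> 'v \<Rightarrow> bool" where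
  "subE E D x y \<longleftrightarrow> E x y \<and> \<not> (\<exists>X\<in>D. x \<in> X \<and> y \<in> X)"

text \<open>The subpath of the rim starting at position i with k vertices (going forward);
  its j-th vertex.\<close>
definition pv :: "'v list \<Rightarrow> nat \<Rightarrow> nat \<Rightarrow> 'v" where
  "pv cyc i j = cyc ! ((i + j) mod length cyc)"

definition end_path :: "'v set set \<Rightarrow> 'v list \<Rightarrow> 'v set \<Rightarrow> 'v set \<Rightarrow> nat \<Rightarrow> nat \<Rightarrow> bool" where
  "end_path I cyc P Q i k \<longleftrightarrow> i < length cyc \<and> 2 \<le> k \<and> k \<le> length cyc \<and>
     ((pv cyc i 0 \<in> P \<and> pv cyc i (k - 1) \<in> Q) \<or> (pv cyc i 0 \<in> Q \<and> pv cyc i (k - 1) \<in> P)) \<and>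
     (\<forall>j. 0 < j \<and> j < k - 1 \<longrightarrow> pv cyc i j \<notin> \<Union> I)"

definition N_conds :: "'v set \<Rightarrow> 'v set set \<Rightarrow> 'v list \<Rightarrow> bool" where
  "N_conds V I cyc \<longleftrightarrow>
     \<comment> \<open>(N1)\<close>
     (\<forall>A\<in>I. \<forall>i k. end_path I cyc A A i k \<longrightarrow> even k \<and> 4 \<le> k) \<and>
     \<comment> \<open>(N2)\<close>
     (\<forall>A\<in>I. odd (card A)) \<and>
     (\<exists>\<xi>\<in>V.
        \<comment> \<open>(N3)\<close>
        (\<forall>A\<in>I. \<xi> \<in> A) \<and> (\<forall>A\<in>I. \<forall>B\<in>I. A \<noteq> B \<longrightarrow> A \<inter> B = {\<xi>}) \<and>
        \<comment> \<open>(N4): A\<xi>-paths (one end in A, the other end the vertex \<xi>)\<close>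
        (\<forall>A\<in>I. \<forall>i k. end_path I cyc A {\<xi>} i k \<longrightarrow> even k)) \<and>
     \<comment> \<open>(N5): AB-paths for A \<noteq> B (ends in A resp. B, not the common vertex)\<close>
     (\<forall>A\<in>I. \<forall>B\<in>I. A \<noteq> B \<longrightarrow> (\<forall>i k. end_path I cyc (A - B) (B - A) i k \<longrightarrow> odd k))"

definition satisfies_N :: "'v set \<Rightarrow> ('v \<Rightarrow> 'v \<Rightarrow> bool) \<Rightarrow> bool" where
  "satisfies_N V E \<longleftrightarrow> (\<forall>cyc. is_rim V E cyc \<longrightarrow> N_conds V (inscr V E) cyc)"

text \<open>Sunoid: the multisun and all its sub-multisuns (D a proper subset of the inscribed
  cliques; D = {} gives the multisun itself) satisfy the N-conditions.\<close>
definition sunoid :: "'v set \<Rightarrow> ('v \<Rightarrow> 'v \<Rightarrow> bool) \<Rightarrow> bool" where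
  "sunoid V E \<longleftrightarrow> multisun V E \<and> (\<forall>D. D \<subset> inscr V E \<longrightarrow> satisfies_N V (subE E D))"

text \<open>Alphabet: \<epsilon>, \<sigma>, and one letter specific to each inscribed clique X.\<close>
datatype 'v letter = Eps | Sig | Lt "'v set"

definition proper :: "'v letter \<Rightarrow> bool" where
  "proper x \<longleftrightarrow> x \<noteq> Eps \<and> x \<noteq> Sig"

text \<open>Pattern: repeatedly delete \<epsilon>\<epsilon> (the normal form is unique; greedy deletion).\<close>
fun pat :: "'v letter list \<Rightarrow> 'v letter list" where
  "pat [] = []"
| "pat (Eps # Eps # xs) = pat xs"
| "pat (x # xs) = x # pat xs"

definition wsim :: "'a list \<Rightarrow> 'a list \<Rightarrow> bool" where
  "wsim u v \<longleftrightarrow> (\<exists>k. v = rotate k u \<or> v = rotate k (rev u))"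

definition wapprox :: "'v letter list \<Rightarrow> 'v letter list \<Rightarrow> bool" where
  "wapprox u v \<longleftrightarrow> wsim (pat u) (pat v)"

definition lab :: "'v set set \<Rightarrow> 'v \<Rightarrow> 'v letter" where
  "lab I v = (if 2 \<le> card {X\<in>I. v \<in> X} then Sig
              else if \<exists>X\<in>I. v \<in> X then Lt (THE X. X \<in> I \<and> v \<in> X) else Eps)"

definition sword :: "'v set \<Rightarrow> ('v \<Rightarrow> 'v \<Rightarrow> bool) \<Rightarrow> 'v letter list set" where
  "sword V E = {u. \<exists>cyc. is_rim V E cyc \<and>
      ((\<exists>v\<in>V. lab (inscr V E) v = Sig) \<longrightarrow> lab (inscr V E) (hd cyc) = Sig) \<and>
      wapprox (map (lab (inscr V E)) cyc) u}"

definition sunword :: "'v letter list set \<Rightarrow> bool" where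
  "sunword W \<longleftrightarrow> (\<exists>V E. sunoid V E \<and> W = sword V E)"

fun ins_eps :: "'v letter list \<Rightarrow> 'v letter list" where
  "ins_eps [] = []"
| "ins_eps [x] = [x]"
| "ins_eps (x # y # xs) =
     (if x = y \<and> proper x then x # Eps # Eps # ins_eps (y # xs) else x # ins_eps (y # xs))"

text \<open>For a representative r = \<sigma>u: v = \<sigma>\<epsilon>\<epsilon>z\<epsilon>\<epsilon>.\<close>
definition vword :: "'v letter list \<Rightarrow> 'v letter list" where
  "vword r = Sig # Eps # Eps # ins_eps (tl r) @ [Eps, Eps]"

text \<open>Least cyclic distance from position 1 (index 0) to a position labelled x.\<close>
definition cdist :: "'v letter list \<Rightarrow> 'v letter \<Rightarrow> nat" where
  "cdist v x = Min {min p (length v - p) | p. p < length v \<and> v ! p = x}"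

definition prec :: "'v letter list \<Rightarrow> 'v letter \<Rightarrow> 'v letter \<Rightarrow> bool" where
  "prec r x y \<longleftrightarrow> (x = Sig \<and> proper y) \<or>
     (proper x \<and> proper y \<and> x \<noteq> y \<and> cdist (vword r) x < cdist (vword r) y)"

text \<open>x \<preceq> y form a cover pair (letters of \<Sigma> \<setminus> {\<epsilon>} = letters of r other than \<epsilon>).\<close>
definition cover_ord :: "'v letter list \<Rightarrow> 'v letter \<Rightarrow> 'v letter \<Rightarrow> bool" where
  "cover_ord r x y \<longleftrightarrow> (x = y \<or> prec r x y) \<and>
     \<not> (\<exists>z \<in> set r - {Eps}. z \<noteq> x \<and> z \<noteq> y \<and> prec r x z \<and> prec r z y)"

definition cover_pair :: "'v letter list \<Rightarrow> 'v letter \<Rightarrow> 'v letter \<Rightarrow> bool" where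
  "cover_pair r x y \<longleftrightarrow> cover_ord r x y \<or> cover_ord r y x"

fun blocks :: "('v letter \<times> nat) list \<Rightarrow> 'v letter list" where
  "blocks [] = []"
| "blocks [(x, l)] = replicate l x"
| "blocks ((x, l) # b # bs) = replicate l x @ Eps # blocks (b # bs)"

text \<open>W is jump-free: for every representative r = \<sigma> x_1^{l_1} \<epsilon> ... \<epsilon> x_s^{l_s} in W
  (proper x_j, positive l_j), with the order induced by r, any two cyclically consecutive
  letters of \<sigma>, x_1, ..., x_s form a cover pair. (Type (i) s-words have no such
  representative and are jump-free, as stipulated.)\<close>
definition jump_free :: "'v letter list set \<Rightarrow> bool" where
  "jump_free W \<longleftrightarrow> (\<forall>r\<in>W. \<forall>bs.
     r = Sig # blocks bs \<and> (\<forall>(x, l) \<in> set bs. proper x \<and> 0 < l) \<longrightarrow>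
     (let xs = Sig # map fst bs in
      \<forall>h \<le> length bs. cover_pair r (xs ! h) (xs ! ((h + 1) mod (length bs + 1)))))"

end

theory Submission
  imports Defs
begin


definition betw :: "'a list \<Rightarrow> 'a \<Rightarrow> 'a \<Rightarrow> bool" where
  "betw xs X Y \<longleftrightarrow> (\<forall>us ws. xs = us @ Y # ws \<longrightarrow> X \<in> set us \<and> X \<in> set ws)"

definition outer :: "'a list \<Rightarrow> 'a \<Rightarrow> 'a \<Rightarrow> bool" where
  "outer L X Y \<longleftrightarrow> X \<noteq> Y \<and> X \<in> set L \<and> Y \<in> set L \<and> hd (filter (\<lambda>z. z = X \<or> z = Y) L) = X"

definition H1 :: "'a list \<Rightarrow> bool" where
  "H1 L \<longleftrightarrow> (\<forall>x. even (count_list L x))"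

definition H2 :: "'a list \<Rightarrow> bool" where
  "H2 L \<longleftrightarrow> (\<forall>a b c U V. L = a @ U # b @ V # c \<longrightarrow> U \<noteq> V \<longrightarrow> U \<notin> set b \<longrightarrow> V \<notin> set b \<longrightarrow>
      even (count_list a U + count_list a V))"

lemma filter_append_split:
  "filter P xs = ys @ zs \<Longrightarrow> \<exists>us vs. xs = us @ vs \<and> filter P us = ys \<and> filter P vs = zs"
proof (induction ys arbitrary: xs)
  case Nil
  then show ?case by (rule_tac x="[]" in exI) auto
next
  case (Cons y ys)
  then have "filter P xs = y # (ys @ zs)" by simp
  from filter_eq_ConsD[OF this] obtain us vs where
    h: "xs = us @ y # vs" "\<forall>u\<in>set us. \<not> P u" "P y" "ys @ zs = filter P vs" by blast
  from Cons.IH[OF h(4)[symmetric]] obtain us' vs' where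
    h2: "vs = us' @ vs'" "filter P us' = ys" "filter P vs' = zs" by blast
  show ?case
    apply (rule exI[of _ "us @ y # us'"], rule exI[of _ vs'])
    using h h2 by auto
qed

lemma count_filter: "count_list (filter P xs) x = (if P x then count_list xs x else 0)"
  by (induction xs) auto

lemma len_filter2: "U \<noteq> V \<Longrightarrow> length (filter (\<lambda>z. z = U \<or> z = V) xs) = count_list xs U + count_list xs V"
  by (induction xs) auto

lemma adj_even:
  assumes "H2 L" "U \<noteq> V" "filter (\<lambda>z. z = U \<or> z = V) L = a' @ x # y # c'" "x \<noteq> y"
  shows "even (length a')"
proof -
  let ?Q = "\<lambda>z. z = U \<or> z = V"
  from filter_append_split[OF assms(3)] obtain us vs where
    h: "L = us @ vs" "filter ?Q us = a'" "filter ?Q vs = x # y # c'" by blast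
  from filter_eq_ConsD[OF h(3)] obtain us2 vs2 where
    h2: "vs = us2 @ x # vs2" "\<forall>u\<in>set us2. \<not> ?Q u" "?Q x" "y # c' = filter ?Q vs2" by blast
  from filter_eq_ConsD[OF h2(4)[symmetric]] obtain us3 vs3 where
    h3: "vs2 = us3 @ y # vs3" "\<forall>u\<in>set us3. \<not> ?Q u" "?Q y" by blast
  have L: "L = (us @ us2) @ x # us3 @ y # vs3" using h h2 h3 by simp
  have xy: "x \<notin> set us3" "y \<notin> set us3" "x \<notin> set us2" "y \<notin> set us2" using h2 h3 by auto
  have "even (count_list (us @ us2) x + count_list (us @ us2) y)"
    using assms(1) L assms(4) xy unfolding H2_def by blast
  moreover have "count_list (us @ us2) x + count_list (us @ us2) y = count_list us U + count_list us V"
    using xy h2(3) h3(3) assms(4) by auto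
  moreover have "count_list us U + count_list us V = length a'"
    using len_filter2[OF assms(2), of us] h(2) by simp
  ultimately show ?thesis using xy by (simp, presburger)
qed

lemma split2: "Suc k < length xs \<Longrightarrow> xs = take k xs @ xs!k # xs!Suc k # drop (Suc (Suc k)) xs"
  by (metis Cons_nth_drop_Suc Suc_lessD append_take_drop_id)

lemma two_letter_odd:
  assumes set: "set rs \<subseteq> {U, V}" and UV: "U \<noteq> V" and ne: "rs \<noteq> []" and hd: "hd rs = U"
    and AP: "\<And>a' x y c'. rs = a' @ x # y # c' \<Longrightarrow> x \<noteq> y \<Longrightarrow> even (length a')"
  shows "2*j+1 \<le> length rs \<Longrightarrow> odd (count_list (take (2*j+1) rs) U) \<and> even (count_list (take (2*j+1) rs) V)"
proof (induction j)
  case 0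
  then show ?case using ne hd UV by (cases rs) auto
next
  case (Suc j)
  let ?k = "2*j+1"
  have lt: "Suc ?k < length rs" using Suc.prems by simp
  have eq: "rs!?k = rs!Suc ?k"
  proof (rule ccontr)
    assume "rs!?k \<noteq> rs!Suc ?k"
    from AP[OF split2[OF lt] this] lt show False by simp
  qed
  have tk: "take (2 * Suc j + 1) rs = take ?k rs @ [rs!?k, rs!Suc ?k]"
    using lt by (simp add: take_Suc_conv_app_nth)
  have "rs!?k \<in> {U,V}" using set lt by (meson nth_mem Suc_lessD subsetD)
  then show ?case using Suc.IH Suc.prems tk eq by auto
qed

lemma two_letter_odd':
  assumes set: "set rs \<subseteq> {U, V}" and UV: "U \<noteq> V" and ne: "rs \<noteq> []" and hd: "hd rs = U"
    and AP: "\<And>a' x y c'. rs = a' @ x # y # c' \<Longrightarrow> x \<noteq> y \<Longrightarrow> even (length a')"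
    and m: "odd m" "m \<le> length rs"
  shows "odd (count_list (take m rs) U) \<and> even (count_list (take m rs) V)"
proof -
  obtain j where "m = 2*j+1" using m(1) oddE by blast
  then show ?thesis using two_letter_odd[OF assms(1-5)] m by simp
qed

lemma switch_L:
  assumes "H1 L" "H2 L" "U \<noteq> V" "hd (filter (\<lambda>z. z = U \<or> z = V) L) = U"
    "filter (\<lambda>z. z = U \<or> z = V) L = a @ x # y # c" "x \<noteq> y"
  shows "odd (count_list (a @ [x]) U) \<and> even (count_list (a @ [x]) V)"
proof -
  let ?rs = "filter (\<lambda>z. z = U \<or> z = V) L"
  have AP: "\<And>a' x y c'. ?rs = a' @ x # y # c' \<Longrightarrow> x \<noteq> y \<Longrightarrow> even (length a')"
    using adj_even[OF assms(2,3)] by blast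
  have ev: "even (length a)" using AP[OF assms(5,6)] .
  have setrs: "set ?rs \<subseteq> {U,V}" by auto
  have "odd (count_list (take (Suc (length a)) ?rs) U) \<and> even (count_list (take (Suc (length a)) ?rs) V)"
    by (rule two_letter_odd'[OF setrs assms(3) _ assms(4) AP]) (use ev assms(5) in auto)
  moreover have "take (Suc (length a)) ?rs = a @ [x]" using assms(5) by simp
  ultimately show ?thesis by simp
qed

lemma last_L:
  assumes "H1 L" "H2 L" "U \<noteq> V" "filter (\<lambda>z. z = U \<or> z = V) L \<noteq> []"
    "hd (filter (\<lambda>z. z = U \<or> z = V) L) = U"
  shows "last (filter (\<lambda>z. z = U \<or> z = V) L) = U"
proof (rule ccontr)
  assume nl: "last (filter (\<lambda>z. z = U \<or> z = V) L) \<noteq> U"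
  let ?rs = "filter (\<lambda>z. z = U \<or> z = V) L"
  have AP: "\<And>a' x y c'. ?rs = a' @ x # y # c' \<Longrightarrow> x \<noteq> y \<Longrightarrow> even (length a')"
    using adj_even[OF assms(2,3)] by blast
  have len: "length ?rs = count_list L U + count_list L V" using len_filter2[OF assms(3)] .
  have evl: "even (length ?rs)" using assms(1) unfolding H1_def len by simp
  have pos: "length ?rs \<ge> 1" using assms(4) by (cases ?rs) auto
  have om: "odd (length ?rs - 1)"
  proof -
    obtain n where n: "length ?rs = n" by simp
    show ?thesis using evl pos unfolding n by presburger
  qed
  have c1: "odd (count_list (take (length ?rs - 1) ?rs) U)"
  proof -
    have setrs: "set ?rs \<subseteq> {U,V}" by auto
    show ?thesis using two_letter_odd'[OF setrs assms(3) assms(4) assms(5) AP om] by simp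
  qed
  have bl: "take (length ?rs - 1) ?rs @ [last ?rs] = ?rs"
    using assms(4) by (metis append_butlast_last_id butlast_conv_take)
  have "count_list ?rs U = count_list (take (length ?rs - 1) ?rs) U"
    using arg_cong[OF bl, of "\<lambda>xs. count_list xs U"] nl by simp
  moreover have "count_list ?rs U = count_list L U" by (simp add: count_filter)
  ultimately show False using c1 assms(1) unfolding H1_def by metis
qed

lemma outer_betw:
  assumes "H1 L" "H2 L" "outer L X Y"
  shows "betw L X Y"
  unfolding betw_def
proof (intro allI impI)
  fix us ws assume L: "L = us @ Y # ws"
  let ?Q = "\<lambda>z. z = X \<or> z = Y"
  have XY: "X \<noteq> Y" and hd: "hd (filter ?Q L) = X" using assms(3) unfolding outer_def by auto
  have fL: "filter ?Q L = filter ?Q us @ Y # filter ?Q ws" using L by simp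
  have allY: "\<And>xs. X \<notin> set xs \<Longrightarrow> \<forall>z\<in>set (filter ?Q xs). z = Y" by auto
  show "X \<in> set us \<and> X \<in> set ws"
  proof
    show "X \<in> set us"
    proof (rule ccontr)
      assume "X \<notin> set us"
      then have "hd (filter ?Q L) = Y" using fL allY[of us]
        by (cases "filter ?Q us") auto
      then show False using hd XY by simp
    qed
    show "X \<in> set ws"
    proof (rule ccontr)
      assume nx: "X \<notin> set ws"
      have "last (filter ?Q L) = Y" using fL allY[OF nx]
        by (cases "filter ?Q ws" rule: rev_cases) auto
      moreover have "last (filter ?Q L) = X"
        using last_L[OF assms(1,2) XY] fL hd by simp
      ultimately show False using XY by simp
    qed
  qed
qed

lemma allX_app: "\<forall>z\<in>set xs. z = X \<Longrightarrow> xs @ X # t = X # (xs @ t)"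
  by (induction xs) auto

lemma key:
  assumes H: "H1 L" "H2 L" and o1: "outer L X Z" and o2: "outer L Z Y" and XY: "X \<noteq> Y"
    and L: "L = p @ A # B # s" and AB: "(A = X \<and> B = Y) \<or> (A = Y \<and> B = X)"
  shows False
proof -
  have XZ: "X \<noteq> Z" and ZY: "Z \<noteq> Y" using o1 o2 unfolding outer_def by auto
  have bZY: "betw L Z Y" using outer_betw[OF H o2] .
  have "Z \<in> set p"
  proof (cases "A = Y")
    case True
    then have "L = p @ Y # (B # s)" using L by simp
    then show ?thesis using bZY unfolding betw_def by blast
  next
    case False
    then have "B = Y" "A = X" using AB by auto
    then have "L = (p @ [A]) @ Y # s" using L by simp
    then have "Z \<in> set (p @ [A])" using bZY unfolding betw_def by blast
    then show ?thesis using \<open>A = X\<close> XZ by auto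
  qed
  then obtain p1 p2 where p: "p = p1 @ Z # p2" "Z \<notin> set p2" by (meson split_list_last)
  define Q1 where "Q1 = (\<lambda>z. z = X \<or> z = Z)"
  define Q2 where "Q2 = (\<lambda>z. z = Z \<or> z = Y)"
  have "filter Q1 (A # B # s) = X # filter Q1 s"
    using AB XZ XY ZY unfolding Q1_def by auto
  moreover have "\<forall>z\<in>set (filter Q1 p2). z = X" using p(2) unfolding Q1_def by auto
  ultimately have f1: "filter Q1 L = filter Q1 p1 @ Z # X # (filter Q1 p2 @ filter Q1 s)"
  proof -
    assume a1: "filter Q1 (A # B # s) = X # filter Q1 s" and a2: "\<forall>z\<in>set (filter Q1 p2). z = X"
    have q: "Q1 Z" by (simp add: Q1_def)
    have "filter Q1 L = filter Q1 p1 @ Z # (filter Q1 p2 @ filter Q1 (A # B # s))"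
      unfolding L p using q by (simp del: filter.simps add: filter.simps(2)[of Q1 Z])
    also have "\<dots> = filter Q1 p1 @ Z # X # (filter Q1 p2 @ filter Q1 s)"
      unfolding a1 using allX_app[OF a2] by simp
    finally show ?thesis .
  qed
  have "filter Q2 (A # B # s) = Y # filter Q2 s"
    using AB ZY XY XZ unfolding Q2_def by auto
  moreover have "\<forall>z\<in>set (filter Q2 p2). z = Y" using p(2) unfolding Q2_def by auto
  ultimately have f2: "filter Q2 L = filter Q2 p1 @ Z # Y # (filter Q2 p2 @ filter Q2 s)"
  proof -
    assume a1: "filter Q2 (A # B # s) = Y # filter Q2 s" and a2: "\<forall>z\<in>set (filter Q2 p2). z = Y"
    have q: "Q2 Z" by (simp add: Q2_def)
    have "filter Q2 L = filter Q2 p1 @ Z # (filter Q2 p2 @ filter Q2 (A # B # s))"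
      unfolding L p using q by (simp del: filter.simps add: filter.simps(2)[of Q2 Z])
    also have "\<dots> = filter Q2 p1 @ Z # Y # (filter Q2 p2 @ filter Q2 s)"
      unfolding a1 using allX_app[OF a2] by simp
    finally show ?thesis .
  qed
  have h1: "hd (filter Q1 L) = X" using o1 unfolding outer_def Q1_def by simp
  have h2: "hd (filter Q2 L) = Z" using o2 unfolding outer_def Q2_def by simp
  have e1: "even (count_list (filter Q1 p1 @ [Z]) Z)"
    using switch_L[OF H XZ h1[unfolded Q1_def] f1[unfolded Q1_def] XZ[symmetric]] unfolding Q1_def by simp
  have e2: "odd (count_list (filter Q2 p1 @ [Z]) Z)"
    using switch_L[OF H ZY h2[unfolded Q2_def] f2[unfolded Q2_def] ZY] unfolding Q2_def by simp
  have "count_list (filter Q1 p1) Z = count_list p1 Z" "count_list (filter Q2 p1) Z = count_list p1 Z"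
    unfolding Q1_def Q2_def by (simp_all add: count_filter)
  then show False using e1 e2 by simp
qed

lemma cdist_lt:
  assumes b: "betw v X Y" and Y: "Y \<in> set v"
  shows "cdist v X < cdist v Y"
proof -
  let ?n = "length v"
  define S where "S x = {min p (?n - p) | p. p < ?n \<and> v ! p = x}" for x
  have fin: "finite (S x)" for x
  proof -
    have "S x \<subseteq> (\<lambda>p. min p (?n - p)) ` {..<?n}" unfolding S_def by auto
    then show ?thesis by (rule finite_subset) simp
  qed
  have ne: "S Y \<noteq> {}" using Y unfolding S_def by (auto simp: in_set_conv_nth)
  have "cdist v Y \<in> S Y" unfolding cdist_def S_def[symmetric] using fin ne by (rule Min_in)
  then obtain p where p: "p < ?n" "v ! p = Y" "cdist v Y = min p (?n - p)" unfolding S_def by auto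
  have dec: "v = take p v @ Y # drop (Suc p) v" using p by (metis id_take_nth_drop)
  then have "X \<in> set (take p v)" "X \<in> set (drop (Suc p) v)" using b unfolding betw_def by blast+
  then obtain p1 i where p1: "p1 < p" "v ! p1 = X" and i: "i < ?n - Suc p" "v ! (Suc p + i) = X"
    by (auto simp: in_set_conv_nth)
  have m1: "min p1 (?n - p1) \<in> S X" unfolding S_def using p1 p by auto
  have m2: "min (Suc p + i) (?n - (Suc p + i)) \<in> S X" unfolding S_def using i by auto
  have c1: "cdist v X \<le> min p1 (?n - p1)" unfolding cdist_def S_def[symmetric] using fin m1 by (rule Min_le)
  have c2: "cdist v X \<le> min (Suc p + i) (?n - (Suc p + i))" unfolding cdist_def S_def[symmetric] using fin m2 by (rule Min_le)
  show ?thesis using c1 c2 p1 i p by linarith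
qed

lemma betw_filter: "betw (filter P v) X Y \<Longrightarrow> P Y \<Longrightarrow> betw v X Y"
  unfolding betw_def
proof (intro allI impI)
  fix us ws assume b: "\<forall>us ws. filter P v = us @ Y # ws \<longrightarrow> X \<in> set us \<and> X \<in> set ws"
    and PY: "P Y" and v: "v = us @ Y # ws"
  have "filter P v = filter P us @ Y # filter P ws" using v PY by simp
  then have "X \<in> set (filter P us) \<and> X \<in> set (filter P ws)" using b by blast
  then show "X \<in> set us \<and> X \<in> set ws" by auto
qed

lemma betw_rev: "betw L X Y \<Longrightarrow> betw (rev L) X Y"
  unfolding betw_def
proof (intro allI impI)
  fix us ws assume b: "\<forall>us ws. L = us @ Y # ws \<longrightarrow> X \<in> set us \<and> X \<in> set ws"
    and v: "rev L = us @ Y # ws"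
  have "L = rev ws @ Y # rev us" using v by (metis rev_append rev_rev_ident rev.simps append.assoc append_Cons append_Nil)
  then show "X \<in> set us \<and> X \<in> set ws" using b[rule_format, of "rev ws" "rev us"] by auto
qed

lemma ins_eps_filter: "filter proper (ins_eps xs) = filter proper xs"
  by (induction xs rule: ins_eps.induct) (auto simp: proper_def)

lemma vword_filter: "filter proper (vword r) = filter proper (tl r)"
  unfolding vword_def by (simp add: ins_eps_filter proper_def)

lemma dichot:
  assumes "X \<noteq> Y" "X \<in> set L" "Y \<in> set L"
  shows "outer L X Y \<or> outer L Y X"
proof -
  let ?Q = "\<lambda>z. z = X \<or> z = Y"
  have "filter ?Q L \<noteq> []" using assms(2) by (simp add: filter_empty_conv) blast
  then have "hd (filter ?Q L) \<in> set (filter ?Q L)" by (rule hd_in_set)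
  then have "hd (filter ?Q L) = X \<or> hd (filter ?Q L) = Y" unfolding set_filter by blast
  moreover have "filter (\<lambda>z. z = Y \<or> z = X) L = filter ?Q L" by (metis disj_commute)
  ultimately show ?thesis using assms unfolding outer_def by auto
qed

lemma outer_first: "L = x # t \<Longrightarrow> z \<in> set L \<Longrightarrow> z \<noteq> x \<Longrightarrow> outer L x z"
  unfolding outer_def by auto

lemma outer_last:
  assumes H: "H1 L" "H2 L" and L: "L = p @ [x]" and z: "z \<in> set L" "z \<noteq> x"
  shows "outer L x z"
proof -
  have "x \<in> set L" using L by simp
  from dichot[OF z(2) z(1) this] have "outer L z x \<or> outer L x z" by blast
  moreover have "\<not> outer L z x"
  proof
    assume "outer L z x"
    then have "betw L z x" using outer_betw[OF H] by blast
    from this[unfolded betw_def, rule_format, of p "[]"] L show False by simp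
  qed
  ultimately show ?thesis by blast
qed




definition H2P :: "('a \<Rightarrow> bool) \<Rightarrow> 'a list \<Rightarrow> bool" where
  "H2P P w \<longleftrightarrow> (\<forall>a b c U V. w = a @ U # b @ V # c \<longrightarrow> U \<noteq> V \<longrightarrow> P U \<longrightarrow> P V \<longrightarrow>
      U \<notin> set b \<longrightarrow> V \<notin> set b \<longrightarrow> even (count_list a U + count_list a V))"

lemma H1_filter: "(\<forall>x. P x \<longrightarrow> even (count_list w x)) \<Longrightarrow> H1 (filter P w)"
  unfolding H1_def by (simp add: count_filter)

lemma H2_filter:
  assumes "H2P P w" shows "H2 (filter P w)"
  unfolding H2_def
proof (intro allI impI)
  fix a b c U V
  assume f: "filter P w = a @ U # b @ V # c" and UV: "U \<noteq> V" and nb: "U \<notin> set b" "V \<notin> set b"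
  have "U \<in> set (filter P w)" "V \<in> set (filter P w)" using f by simp_all
  then have PU: "P U" and PV: "P V" by simp_all
  from filter_append_split[OF f] obtain us vs where
    h: "w = us @ vs" "filter P us = a" "filter P vs = U # b @ V # c" by blast
  from filter_eq_ConsD[OF h(3)] obtain us2 vs2 where
    h2: "vs = us2 @ U # vs2" "\<forall>u\<in>set us2. \<not> P u" "b @ V # c = filter P vs2" by blast
  from filter_append_split[OF h2(3)[symmetric]] obtain us3 vs3 where
    h3: "vs2 = us3 @ vs3" "filter P us3 = b" "filter P vs3 = V # c" by blast
  from filter_eq_ConsD[OF h3(3)] obtain us4 vs4 where
    h4: "vs3 = us4 @ V # vs4" "\<forall>u\<in>set us4. \<not> P u" by blast
  have w: "w = (us @ us2) @ U # (us3 @ us4) @ V # vs4" using h h2 h3 h4 by simp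
  have "U \<notin> set (us3 @ us4)" "V \<notin> set (us3 @ us4)" using nb h3(2) h4(2) PU PV by auto
  then have "even (count_list (us @ us2) U + count_list (us @ us2) V)"
    using assms[unfolded H2P_def, rule_format, OF w UV PU PV] by blast
  moreover have "count_list us2 U = 0" "count_list us2 V = 0" using h2(2) PU PV by auto
  moreover have "count_list a U = count_list us U" "count_list a V = count_list us V"
    using h(2) PU PV by (auto simp: count_filter)
  ultimately show "even (count_list a U + count_list a V)" by simp
qed

lemma H2_rev:
  assumes "H1 L" "H2 L" shows "H2 (rev L)"
  unfolding H2_def
proof (intro allI impI)
  fix a b c U V
  assume f: "rev L = a @ U # b @ V # c" and UV: "U \<noteq> V" and nb: "U \<notin> set b" "V \<notin> set b"
  have L: "L = rev c @ V # rev b @ U # rev a" using f by (metis rev_rev_ident rev_append rev.simps append.assoc append_Cons append_Nil)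
  have "even (count_list (rev c) V + count_list (rev c) U)"
    using assms(2)[unfolded H2_def, rule_format, of "rev c" V "rev b" U "rev a"] L UV nb by simp
  then have e1: "even (count_list c V + count_list c U)" by simp
  have e2: "even (count_list L U)" "even (count_list L V)" using assms(1) unfolding H1_def by auto
  have cU: "count_list L U = count_list c U + count_list a U + 1" using L UV nb by simp
  have cV: "count_list L V = count_list c V + count_list a V + 1" using L UV nb by simp
  show "even (count_list a U + count_list a V)" using e1 e2 cU cV by presburger
qed

lemma blocks_filter:
  "\<forall>(x,l)\<in>set bs. proper x \<Longrightarrow> filter proper (blocks bs) = concat (map (\<lambda>(x,l). replicate l x) bs)"
  by (induction bs rule: blocks.induct) (auto simp: proper_def filter_replicate)

lemma cc_adj:
  assumes pos: "\<forall>(x,l)\<in>set bs. 0 < l" and h: "0 < h" "h < length bs"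
  shows "\<exists>p s. concat (map (\<lambda>(x,l). replicate l x) bs) = p @ fst (bs!(h-1)) # fst (bs!h) # s"
proof -
  let ?f = "\<lambda>(x::'a,l::nat). replicate l x"
  have bs: "bs = take (h-1) bs @ bs!(h-1) # bs!h # drop (Suc h) bs"
  proof -
    have hh: "Suc (h-1) = h" using h by simp
    show ?thesis using split2[of "h-1" bs, unfolded hh, OF h(2)] .
  qed
  obtain x1 l1 where b1: "bs!(h-1) = (x1,l1)" by fastforce
  obtain x2 l2 where b2: "bs!h = (x2,l2)" by fastforce
  have "bs!(h-1) \<in> set bs" "bs!h \<in> set bs" using h by simp_all
  then have "l1 > 0" "l2 > 0" using pos b1 b2 by auto
  have r1: "replicate l1 x1 = replicate (l1 - 1) x1 @ [x1]" using \<open>l1 > 0\<close>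
    by (cases l1) (simp_all add: replicate_append_same)
  have r2: "replicate l2 x2 = x2 # replicate (l2 - 1) x2" using \<open>l2 > 0\<close>
    by (cases l2) simp_all
  have "concat (map ?f bs) = concat (map ?f (take (h-1) bs)) @ replicate l1 x1 @ replicate l2 x2 @ concat (map ?f (drop (Suc h) bs))"
    by (subst (1) bs) (simp add: b1 b2 b1[simplified])
  then show ?thesis using r1 r2 b1 b2 by (intro exI[of _ "concat (map ?f (take (h-1) bs)) @ replicate (l1 - 1) x1"]
      exI[of _ "replicate (l2 - 1) x2 @ concat (map ?f (drop (Suc h) bs))"]) simp
qed

lemma cc_first:
  assumes pos: "\<forall>(x,l)\<in>set bs. 0 < l" and ne: "bs \<noteq> []"
  shows "\<exists>t. concat (map (\<lambda>(x,l). replicate l x) bs) = fst (bs!0) # t"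
proof -
  obtain x l bs' where b: "bs = (x,l) # bs'" using ne by (metis list.exhaust surj_pair)
  then have "l > 0" using pos by auto
  then show ?thesis using b by (cases l) auto
qed

lemma cc_last:
  assumes pos: "\<forall>(x,l)\<in>set bs. 0 < l" and ne: "bs \<noteq> []"
  shows "\<exists>p. concat (map (\<lambda>(x,l). replicate l x) bs) = p @ [fst (last bs)]"
proof -
  obtain x l bs' where b: "bs = bs' @ [(x,l)]" using ne by (metis rev_exhaust surj_pair)
  then have "l > 0" using pos by auto
  then have "replicate l x = replicate (l - 1) x @ [x]" by (cases l) (simp_all add: replicate_append_same)
  then show ?thesis using b by auto
qed

lemma prec_Sig2: "\<not> prec r x Sig"
  unfolding prec_def proper_def by simp

lemma comb_main:
  fixes bs :: "('v letter \<times> nat) list"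
  assumes pr: "\<forall>(x,l)\<in>set bs. proper x \<and> 0 < l"
    and H: "H1 (filter proper (blocks bs))" "H2 (filter proper (blocks bs))"
  shows "\<forall>h \<le> length bs. cover_pair (Sig # blocks bs) ((Sig # map fst bs)!h)
            ((Sig # map fst bs)!((h+1) mod (length bs+1)))"
proof -
  define r where "r = Sig # blocks bs"
  define L where "L = filter proper (blocks bs)"
  define cd where "cd = cdist (vword r)"
  have HL: "H1 L" "H2 L" using H L_def by simp_all
  have vf: "filter proper (vword r) = L" using vword_filter[of r] unfolding r_def L_def by simp
  have ocd: "cd X < cd Y" if o: "outer L X Y" for X Y
  proof -
    have b: "betw L X Y" using outer_betw[OF HL o] .
    have YL: "Y \<in> set L" using o unfolding outer_def by simp
    then have pY: "proper Y" unfolding L_def by simp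
    have "betw (vword r) X Y" using betw_filter[of proper "vword r" X Y] b pY vf by simp
    moreover have "Y \<in> set (vword r)" using YL vf[symmetric] by simp
    ultimately show ?thesis unfolding cd_def by (rule cdist_lt)
  qed
  have inL: "z \<in> set L" if "z \<in> set r" "z \<noteq> Eps" "z \<noteq> Sig" for z
    using that unfolding r_def L_def proper_def by simp
  have precD: "proper z \<and> proper Y \<and> z \<noteq> Y \<and> cd z < cd Y" if "prec r z Y" "z \<noteq> Sig" for z Y
    using that unfolding prec_def cd_def by auto
  have COsig: "cover_ord r Sig Y" if pY: "proper Y" and oY: "\<forall>z\<in>set L. z \<noteq> Y \<longrightarrow> outer L Y z" for Y
    unfolding cover_ord_def
  proof
    show "Sig = Y \<or> prec r Sig Y" using pY unfolding prec_def by simp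
    show "\<not> (\<exists>z\<in>set r - {Eps}. z \<noteq> Sig \<and> z \<noteq> Y \<and> prec r Sig z \<and> prec r z Y)"
    proof
      assume "\<exists>z\<in>set r - {Eps}. z \<noteq> Sig \<and> z \<noteq> Y \<and> prec r Sig z \<and> prec r z Y"
      then obtain z where z: "z \<in> set r" "z \<noteq> Eps" "z \<noteq> Sig" "z \<noteq> Y" "prec r z Y" by blast
      have "cd z < cd Y" using precD[OF z(5) z(3)] by simp
      moreover have "z \<in> set L" using inL z by simp
      then have "cd Y < cd z" using oY z(4) ocd by blast
      ultimately show False by simp
    qed
  qed
  have CPeq: "cover_pair r X X" for X
    unfolding cover_pair_def cover_ord_def
  proof (rule disjI1, rule conjI)
    show "X = X \<or> prec r X X" by simp
    show "\<not> (\<exists>z\<in>set r - {Eps}. z \<noteq> X \<and> z \<noteq> X \<and> prec r X z \<and> prec r z X)"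
    proof
      assume "\<exists>z\<in>set r - {Eps}. z \<noteq> X \<and> z \<noteq> X \<and> prec r X z \<and> prec r z X"
      then obtain z where z: "prec r X z" "prec r z X" by blast
      have "z \<noteq> Sig" using z(1) prec_Sig2 by metis
      have "X \<noteq> Sig" using z(2) prec_Sig2 by metis
      show False using precD[OF z(1) \<open>X \<noteq> Sig\<close>] precD[OF z(2) \<open>z \<noteq> Sig\<close>] by simp
    qed
  qed
  have COadj: "cover_ord r X Y" if o: "outer L X Y" and Lp: "L = p @ A # B # s"
      and AB: "(A = X \<and> B = Y) \<or> (A = Y \<and> B = X)" for X Y p s A B
    unfolding cover_ord_def
  proof
    have XY: "X \<noteq> Y" "X \<in> set L" "Y \<in> set L" using o unfolding outer_def by auto
    then have pXY: "proper X" "proper Y" unfolding L_def by auto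
    show "X = Y \<or> prec r X Y" using ocd[OF o] pXY XY unfolding prec_def cd_def by simp
    show "\<not> (\<exists>z\<in>set r - {Eps}. z \<noteq> X \<and> z \<noteq> Y \<and> prec r X z \<and> prec r z Y)"
    proof
      assume "\<exists>z\<in>set r - {Eps}. z \<noteq> X \<and> z \<noteq> Y \<and> prec r X z \<and> prec r z Y"
      then obtain z where z: "z \<in> set r" "z \<noteq> Eps" "z \<noteq> X" "z \<noteq> Y" "prec r X z" "prec r z Y" by blast
      have zS: "z \<noteq> Sig" using z(5) prec_Sig2 by metis
      have XS: "X \<noteq> Sig" using pXY unfolding proper_def by simp
      have c1: "cd X < cd z" using precD[OF z(5) XS] by simp
      have c2: "cd z < cd Y" using precD[OF z(6) zS] by simp
      have zL: "z \<in> set L" using inL z zS by simp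
      have o1: "outer L X z"
      proof -
        have "outer L X z \<or> outer L z X" using dichot[OF z(3)[symmetric] XY(2) zL] .
        moreover have "\<not> outer L z X" using ocd c1 by fastforce
        ultimately show ?thesis by blast
      qed
      have o2: "outer L z Y"
      proof -
        have "outer L z Y \<or> outer L Y z" using dichot[OF z(4) zL XY(3)] .
        moreover have "\<not> outer L Y z" using ocd c2 by fastforce
        ultimately show ?thesis by blast
      qed
      show False using key[OF HL o1 o2 XY(1) Lp AB] .
    qed
  qed
  have CPadj: "cover_pair r X Y" if Lp: "L = p @ X # Y # s" for X Y p s
  proof (cases "X = Y")
    case True then show ?thesis using CPeq by simp
  next
    case False
    have "X \<in> set L" "Y \<in> set L" using Lp by auto
    from dichot[OF False this] show ?thesis
    proof
      assume "outer L X Y" then show ?thesis using COadj[OF _ Lp] unfolding cover_pair_def by blast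
    next
      assume "outer L Y X" then show ?thesis using COadj[OF _ Lp] unfolding cover_pair_def by blast
    qed
  qed
  have Lc: "L = concat (map (\<lambda>(x,l). replicate l x) bs)"
    unfolding L_def by (rule blocks_filter) (use pr in auto)
  have pos: "\<forall>(x,l)\<in>set bs. 0 < l" using pr by auto
  show ?thesis unfolding r_def[symmetric]
  proof (intro allI impI)
    fix h assume h: "h \<le> length bs"
    let ?xs = "Sig # map fst bs"
    show "cover_pair r (?xs ! h) (?xs ! ((h + 1) mod (length bs + 1)))"
    proof (cases "bs = []")
      case True
      then show ?thesis using h CPeq by simp
    next
      case ne: False
      show ?thesis
      proof (cases "h = 0")
        case True
        obtain t where t: "L = fst (bs!0) # t" using cc_first[OF pos ne] Lc by auto
        have pY: "proper (fst (bs!0))" using pr ne by (metis (mono_tags, lifting) case_prod_beta length_greater_0_conv nth_mem)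
        have "\<forall>z\<in>set L. z \<noteq> fst (bs!0) \<longrightarrow> outer L (fst (bs!0)) z" using outer_first[OF t] by blast
        then have "cover_ord r Sig (fst (bs!0))" using COsig pY by blast
        moreover have "(h + 1) mod (length bs + 1) = 1" using True ne by simp
        ultimately show ?thesis using True ne unfolding cover_pair_def by simp
      next
        case h0: False
        show ?thesis
        proof (cases "h = length bs")
          case True
          obtain p where p: "L = p @ [fst (last bs)]" using cc_last[OF pos ne] Lc by auto
          have pY: "proper (fst (last bs))" using pr ne by (metis (mono_tags, lifting) case_prod_beta last_in_set)
          have "\<forall>z\<in>set L. z \<noteq> fst (last bs) \<longrightarrow> outer L (fst (last bs)) z"
            using outer_last[OF HL p] by blast
          then have "cover_ord r Sig (fst (last bs))" using COsig pY by blast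
          moreover have "?xs ! h = fst (last bs)" using True ne by (simp add: last_conv_nth)
          moreover have "(h + 1) mod (length bs + 1) = 0" using True by simp
          ultimately show ?thesis unfolding cover_pair_def by simp
        next
          case False
          then have hl: "0 < h" "h < length bs" using h h0 by auto
          obtain p s where "L = p @ fst (bs!(h-1)) # fst (bs!h) # s" using cc_adj[OF pos hl] Lc by auto
          then have "cover_pair r (fst (bs!(h-1))) (fst (bs!h))" by (rule CPadj)
          moreover have "?xs ! h = fst (bs!(h-1))" using hl by (cases h) auto
          moreover have "?xs ! ((h + 1) mod (length bs + 1)) = fst (bs!h)" using hl by simp
          ultimately show ?thesis by simp
        qed
      qed
    qed
  qed
qed



lemma maxclique_clique: "maxclique V E K \<Longrightarrow> clique V E K"
  unfolding maxclique_def by simp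
lemma maxclique_max: "maxclique V E K \<Longrightarrow> clique V E K' \<Longrightarrow> K \<subseteq> K' \<Longrightarrow> K' = K"
  unfolding maxclique_def by simp
lemma maxcliqueI: "clique V E K \<Longrightarrow> (\<And>K'. clique V E K' \<Longrightarrow> K \<subseteq> K' \<Longrightarrow> K' = K) \<Longrightarrow> maxclique V E K"
  unfolding maxclique_def by simp
lemma clique_E: "clique V E K \<Longrightarrow> x \<in> K \<Longrightarrow> y \<in> K \<Longrightarrow> x \<noteq> y \<Longrightarrow> E x y"
  unfolding clique_def by simp
lemma clique_V: "clique V E K \<Longrightarrow> K \<subseteq> V"
  unfolding clique_def by simp

lemma max_ext:
  assumes "sgraph V E" "clique V E K"
  shows "\<exists>M. maxclique V E M \<and> K \<subseteq> M"
proof -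
  define C where "C = {K'. clique V E K' \<and> K \<subseteq> K'}"
  have sub: "C \<subseteq> Pow V" unfolding C_def by (auto dest: clique_V)
  have fV: "finite V" using assms(1) unfolding sgraph_def by simp
  have fin: "finite C" using finite_subset[OF sub] fV by simp
  have KC: "K \<in> C" unfolding C_def using assms(2) by simp
  then have ne: "C \<noteq> {}" by blast
  from finite_has_maximal[OF fin ne] obtain M where M1: "M \<in> C" and M2: "\<forall>b\<in>C. M \<le> b \<longrightarrow> M = b"
    by blast
  have cM: "clique V E M" and KM: "K \<subseteq> M" using M1 unfolding C_def by simp_all
  have "maxclique V E M"
  proof (rule maxcliqueI[OF cM])
    fix K' assume a: "clique V E K'" "M \<subseteq> K'"
    have "K' \<in> C" unfolding C_def using a KM by simp
    with M2 a(2) have "M = K'" by blast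
    then show "K' = M" by simp
  qed
  then show ?thesis using KM by blast
qed

lemma subE_le: "subE E D x y \<Longrightarrow> E x y" unfolding subE_def by simp

lemma clique_subE:
  assumes "clique V (subE E D) K" shows "clique V E K"
  unfolding clique_def
proof (intro conjI ballI impI)
  show "K \<subseteq> V" using assms by (rule clique_V)
  fix x y assume xy: "x \<in> K" "y \<in> K" "x \<noteq> y"
  have "subE E D x y" using clique_E[OF assms xy] .
  then show "E x y" by (rule subE_le)
qed

lemma subEI: "E x y \<Longrightarrow> \<not> (\<exists>X\<in>D. x \<in> X \<and> y \<in> X) \<Longrightarrow> subE E D x y"
  unfolding subE_def by simp
lemma subED: "subE E D x y \<Longrightarrow> X \<in> D \<Longrightarrow> x \<in> X \<Longrightarrow> y \<in> X \<Longrightarrow> False"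
  unfolding subE_def by blast

lemma inscr_max: "K \<in> inscr V E \<Longrightarrow> maxclique V E K" unfolding inscr_def by simp
lemma inscr_card: "K \<in> inscr V E \<Longrightarrow> card K \<noteq> 2" unfolding inscr_def by simp

lemma sub_max:
  assumes sg: "sgraph V E" and rim: "is_rim V E cyc" and D: "D \<subseteq> inscr V E"
    and n3: "\<forall>A\<in>inscr V E. \<forall>B\<in>inscr V E. A \<noteq> B \<longrightarrow> A \<inter> B = {\<xi>}"
  shows "maxclique V (subE E D) K \<longleftrightarrow> maxclique V E K \<and> K \<notin> D"
proof -
  let ?E' = "subE E D"
  have keep: "clique V ?E' M" if M: "maxclique V E M" "M \<notin> D" for M
    unfolding clique_def
  proof (intro conjI ballI impI)
    show "M \<subseteq> V" using clique_V[OF maxclique_clique[OF M(1)]] .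
    fix x y assume xy: "x \<in> M" "y \<in> M" "x \<noteq> y"
    have Exy: "E x y" using clique_E[OF maxclique_clique[OF M(1)] xy] .
    show "?E' x y"
    proof (rule subEI[of E x y D, OF Exy], rule notI)
      assume "\<exists>X\<in>D. x \<in> X \<and> y \<in> X"
      then obtain X where X: "X \<in> D" "x \<in> X" "y \<in> X" by blast
      have XI: "X \<in> inscr V E" using X(1) D by (rule subsetD[rotated])
      show False
      proof (cases "M \<in> inscr V E")
        case True
        have "X \<noteq> M" using X(1) M(2) by metis
        then have "X \<inter> M = {\<xi>}" using n3 True XI by blast
        then show False using X(2,3) xy by (metis IntI singletonD)
      next
        case False
        then have "card M = 2" using M(1) unfolding inscr_def by simp
        then obtain a b where ab: "M = {a,b}" "a \<noteq> b" unfolding card_2_iff by blast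
        have "M \<subseteq> X" using ab xy X(2,3) by auto
        then have "X = M" using maxclique_max[OF M(1) maxclique_clique[OF inscr_max[OF XI]]] by simp
        then show False using X(1) M(2) by simp
      qed
    qed
  qed
  show ?thesis
  proof
    assume K: "maxclique V ?E' K"
    have cK: "clique V E K" using clique_subE[OF maxclique_clique[OF K]] .
    obtain M where M: "maxclique V E M" "K \<subseteq> M" using max_ext[OF sg cK] by blast
    show "maxclique V E K \<and> K \<notin> D"
    proof (cases "M \<in> D")
      case False
      have "clique V ?E' M" using keep[OF M(1) False] .
      then have "M = K" using maxclique_max[OF K _ M(2)] by simp
      then show ?thesis using M False by simp
    next
      case True
      have sub: "x = y" if xy: "x \<in> K" "y \<in> K" for x y
      proof (rule ccontr)
        assume "x \<noteq> y"
        then have "?E' x y" using clique_E[OF maxclique_clique[OF K] xy] by simp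
        then show False using subED[OF _ True] M(2) xy by blast
      qed
      have Vne: "V \<noteq> {}" using rim unfolding is_rim_def by auto
      show ?thesis
      proof (cases "K = {}")
        case True
        obtain x where "x \<in> V" using Vne by blast
        then have c: "clique V ?E' {x}" unfolding clique_def by simp
        have "{x} = K" using maxclique_max[OF K c] True by simp
        then show ?thesis using True by simp
      next
        case False
        then obtain x where x: "x \<in> K" by blast
        then have Kx: "K = {x}" using sub by blast
        have "x \<in> V" using clique_V[OF cK] x by blast
        then have "x \<in> set cyc" using rim unfolding is_rim_def by simp
        then obtain i where i: "i < length cyc" "cyc ! i = x" by (auto simp: in_set_conv_nth)
        let ?y = "cyc ! ((i + 1) mod length cyc)"
        have "{x, ?y} \<in> cyc_edges cyc" unfolding cyc_edges_def using i by blast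
        then have "{x, ?y} \<in> {K. maxclique V E K \<and> card K = 2}" using rim unfolding is_rim_def by simp
        then have e: "maxclique V E {x, ?y}" "card {x, ?y} = 2" by simp_all
        have "{x, ?y} \<notin> D" using e(2) D inscr_card by blast
        then have c: "clique V ?E' {x, ?y}" using keep[OF e(1)] by blast
        have "{x, ?y} = K" using maxclique_max[OF K c] Kx by simp
        then show ?thesis using e(2) Kx by simp
      qed
    qed
  next
    assume a: "maxclique V E K \<and> K \<notin> D"
    show "maxclique V ?E' K"
    proof (rule maxcliqueI)
      show "clique V ?E' K" using keep[OF conjunct1[OF a] conjunct2[OF a]] .
      fix K' assume k: "clique V ?E' K'" "K \<subseteq> K'"
      show "K' = K" using maxclique_max[OF conjunct1[OF a] clique_subE[OF k(1)] k(2)] .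
    qed
  qed
qed

lemma count_take_gap:
  assumes "p \<le> q" "q \<le> length xs" "\<forall>t. p \<le> t \<and> t < q \<longrightarrow> xs!t \<noteq> x"
  shows "count_list (take q xs) x = count_list (take p xs) x"
  using assms
proof (induction q)
  case 0 then show ?case by simp
next
  case (Suc q)
  show ?case
  proof (cases "p = Suc q")
    case True then show ?thesis by simp
  next
    case False
    then have pq: "p \<le> q" using Suc.prems by simp
    have "count_list (take q xs) x = count_list (take p xs) x" using Suc.IH pq Suc.prems by simp
    moreover have "take (Suc q) xs = take q xs @ [xs!q]" using Suc.prems by (simp add: take_Suc_conv_app_nth)
    moreover have "xs!q \<noteq> x" using Suc.prems pq by simp
    ultimately show ?thesis by simp
  qed
qed

lemma list_parity:
  assumes a: "\<forall>i<length xs. xs!i = x \<and> (\<forall>t<i. xs!t \<noteq> x) \<longrightarrow> even i"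
    and b: "\<forall>i j. i < j \<and> j < length xs \<and> xs!i = x \<and> xs!j = x \<and> (\<forall>t. i < t \<and> t < j \<longrightarrow> xs!t \<noteq> x) \<longrightarrow> odd (j - i)"
  shows "i < length xs \<Longrightarrow> xs!i = x \<Longrightarrow> even (i + count_list (take i xs) x)"
proof (induction i rule: less_induct)
  case (less i)
  show ?case
  proof (cases "\<exists>t<i. xs!t = x")
    case False
    then have "x \<notin> set (take i xs)" using less.prems by (auto simp: in_set_conv_nth)
    then have "count_list (take i xs) x = 0" by simp
    moreover have "even i" using a less.prems False by blast
    ultimately show ?thesis by simp
  next
    case True
    define P where "P = {t. t < i \<and> xs!t = x}"
    have fP: "finite P" unfolding P_def by simp
    have neP: "P \<noteq> {}" using True unfolding P_def by simp
    define p where "p = Max P"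
    have pP: "p \<in> P" unfolding p_def using fP neP by (rule Max_in)
    then have p: "p < i" "xs!p = x" unfolding P_def by simp_all
    have gap: "xs!t \<noteq> x" if "p < t" "t < i" for t
    proof
      assume "xs!t = x"
      then have "t \<in> P" unfolding P_def using that by simp
      then have "t \<le> p" unfolding p_def using fP by simp
      then show False using that by simp
    qed
    have IH: "even (p + count_list (take p xs) x)" using less.IH[OF p(1)] p less.prems by simp
    have od: "odd (i - p)" using b p less.prems gap by blast
    have c1: "count_list (take i xs) x = count_list (take (Suc p) xs) x"
      using count_take_gap[of "Suc p" i xs x] p less.prems gap by simp
    have c2: "count_list (take (Suc p) xs) x = count_list (take p xs) x + 1"
      using p less.prems by (simp add: take_Suc_conv_app_nth)
    show ?thesis using IH od c1 c2 p(1) by presburger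
  qed
qed

lemma list_even:
  assumes a: "\<forall>i<length xs. xs!i = x \<and> (\<forall>t<i. xs!t \<noteq> x) \<longrightarrow> even i"
    and b: "\<forall>i j. i < j \<and> j < length xs \<and> xs!i = x \<and> xs!j = x \<and> (\<forall>t. i < t \<and> t < j \<longrightarrow> xs!t \<noteq> x) \<longrightarrow> odd (j - i)"
    and c: "\<forall>i<length xs. xs!i = x \<and> (\<forall>t. i < t \<and> t < length xs \<longrightarrow> xs!t \<noteq> x) \<longrightarrow> odd (length xs - i)"
    and d: "even (length xs)"
  shows "even (count_list xs x)"
proof (cases "x \<in> set xs")
  case False then show ?thesis by simp
next
  case True
  define P where "P = {t. t < length xs \<and> xs!t = x}"
  have fP: "finite P" unfolding P_def by simp
  have neP: "P \<noteq> {}" using True unfolding P_def by (auto simp: in_set_conv_nth)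
  define p where "p = Max P"
  have pP: "p \<in> P" unfolding p_def using fP neP by (rule Max_in)
  then have p: "p < length xs" "xs!p = x" unfolding P_def by simp_all
  have gap: "xs!t \<noteq> x" if "p < t" "t < length xs" for t
  proof
    assume "xs!t = x"
    then have "t \<in> P" unfolding P_def using that by simp
    then have "t \<le> p" unfolding p_def using fP by simp
    then show False using that by simp
  qed
  have par: "even (p + count_list (take p xs) x)" using list_parity[OF a b p] .
  have od: "odd (length xs - p)" using c p gap by blast
  have c1: "count_list (take (length xs) xs) x = count_list (take (Suc p) xs) x"
    using count_take_gap[of "Suc p" "length xs" xs x] p gap by simp
  have c2: "count_list (take (Suc p) xs) x = count_list (take p xs) x + 1"
    using p by (simp add: take_Suc_conv_app_nth)
  have "count_list xs x = count_list (take p xs) x + 1" using c1 c2 by simp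
  then show ?thesis using par od d p(1) by presburger
qed

lemma subN:
  assumes sun: "sunoid V E" and rim: "is_rim V E cyc"
    and n3: "\<forall>A\<in>inscr V E. \<forall>B\<in>inscr V E. A \<noteq> B \<longrightarrow> A \<inter> B = {\<xi>}"
    and S: "S \<subseteq> inscr V E" "S \<noteq> {}"
  shows "N_conds V S cyc"
proof -
  define D where "D = inscr V E - S"
  have DI: "D \<subset> inscr V E" unfolding D_def using S by blast
  have sg: "sgraph V E" using sun unfolding sunoid_def multisun_def by simp
  have satN: "satisfies_N V (subE E D)" using sun DI unfolding sunoid_def by blast
  have mx: "maxclique V (subE E D) K \<longleftrightarrow> maxclique V E K \<and> K \<notin> D" for K
    using sub_max[OF sg rim _ n3] DI by blast
  have e2: "{K. maxclique V (subE E D) K \<and> card K = 2} = {K. maxclique V E K \<and> card K = 2}"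
  proof -
    have "K \<notin> D" if "card K = 2" for K using that DI inscr_card by blast
    then show ?thesis using mx by blast
  qed
  have rim': "is_rim V (subE E D) cyc" using rim e2 unfolding is_rim_def by simp
  have ins: "inscr V (subE E D) = S"
  proof -
    have "inscr V (subE E D) = {K. maxclique V E K \<and> K \<notin> D \<and> card K \<noteq> 2}"
      unfolding inscr_def using mx by blast
    also have "\<dots> = inscr V E - D" unfolding inscr_def by blast
    also have "\<dots> = S" unfolding D_def using S by blast
    finally show ?thesis .
  qed
  show ?thesis using satN rim' ins unfolding satisfies_N_def by metis
qed

lemma subE_empty: "subE E {} = E"
  unfolding subE_def by (intro ext) simp

lemma fullN:
  assumes sun: "sunoid V E" and rim: "is_rim V E cyc" and ne: "inscr V E \<noteq> {}"
  shows "N_conds V (inscr V E) cyc"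
proof -
  have "{} \<subset> inscr V E" using ne by blast
  then have "satisfies_N V (subE E {})" using sun unfolding sunoid_def by blast
  then show ?thesis using rim unfolding subE_empty satisfies_N_def by blast
qed

lemma mk_path:
  assumes "p < q" "q \<le> length cyc" "q - p < length cyc" "cyc ! p \<in> P" "cyc ! (q mod length cyc) \<in> Q"
    "\<forall>t. p < t \<and> t < q \<longrightarrow> cyc ! t \<notin> \<Union> S"
  shows "end_path S cyc P Q p (q - p + 1)"
  unfolding end_path_def
proof (intro conjI)
  show "p < length cyc" using assms by simp
  show "2 \<le> q - p + 1" using assms by simp
  show "q - p + 1 \<le> length cyc" using assms by simp
  have "pv cyc p 0 = cyc ! p" unfolding pv_def using assms by simp
  moreover have "pv cyc p (q - p + 1 - 1) = cyc ! (q mod length cyc)" unfolding pv_def using assms by simp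
  ultimately show "pv cyc p 0 \<in> P \<and> pv cyc p (q - p + 1 - 1) \<in> Q \<or> pv cyc p 0 \<in> Q \<and> pv cyc p (q - p + 1 - 1) \<in> P"
    using assms by simp
  show "\<forall>j. 0 < j \<and> j < q - p + 1 - 1 \<longrightarrow> pv cyc p j \<notin> \<Union> S"
  proof (intro allI impI)
    fix j assume j: "0 < j \<and> j < q - p + 1 - 1"
    then have "p + j < length cyc" using assms(1,2) by linarith
    then have "pv cyc p j = cyc ! (p + j)" unfolding pv_def by simp
    moreover have "p < p + j \<and> p + j < q" using j by linarith
    ultimately show "pv cyc p j \<notin> \<Union> S" using assms(6) by simp
  qed
qed

lemma card2_ex: "2 \<le> card S \<Longrightarrow> \<exists>a\<in>S. \<exists>b\<in>S. a \<noteq> b"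
proof (rule ccontr)
  assume c: "2 \<le> card S" and n: "\<not> (\<exists>a\<in>S. \<exists>b\<in>S. a \<noteq> b)"
  have f: "finite S" using c by (metis card.infinite not_numeral_le_zero)
  have "card S \<le> Suc 0" using card_le_Suc0_iff_eq[OF f] n by blast
  then show False using c by simp
qed

lemma N1_of:
  assumes "N_conds V S cyc" "A \<in> S" "end_path S cyc A A i k" shows "even k"
proof -
  have "\<forall>A\<in>S. \<forall>i k. end_path S cyc A A i k \<longrightarrow> even k \<and> 4 \<le> k"
    using assms(1) unfolding N_conds_def by (rule conjunct1)
  then show ?thesis using assms(2,3) by blast
qed

lemma N5_of:
  assumes "N_conds V S cyc" "A \<in> S" "B \<in> S" "A \<noteq> B" "end_path S cyc (A - B) (B - A) i k"
  shows "odd k"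
proof -
  have "\<forall>A\<in>S. \<forall>B\<in>S. A \<noteq> B \<longrightarrow> (\<forall>i k. end_path S cyc (A - B) (B - A) i k \<longrightarrow> odd k)"
    using assms(1) unfolding N_conds_def by (elim conjE)
  then show ?thesis using assms(2-5) by blast
qed

lemma N3_of:
  assumes "N_conds V S cyc"
  shows "\<exists>\<xi>\<in>V. (\<forall>A\<in>S. \<xi> \<in> A) \<and> (\<forall>A\<in>S. \<forall>B\<in>S. A \<noteq> B \<longrightarrow> A \<inter> B = {\<xi>})"
proof -
  have "\<exists>\<xi>\<in>V. (\<forall>A\<in>S. \<xi> \<in> A) \<and> (\<forall>A\<in>S. \<forall>B\<in>S. A \<noteq> B \<longrightarrow> A \<inter> B = {\<xi>}) \<and>
        (\<forall>A\<in>S. \<forall>i k. end_path S cyc A {\<xi>} i k \<longrightarrow> even k)"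
    using assms unfolding N_conds_def by (elim conjE)
  then obtain \<xi> where "\<xi> \<in> V" "\<forall>A\<in>S. \<xi> \<in> A" "\<forall>A\<in>S. \<forall>B\<in>S. A \<noteq> B \<longrightarrow> A \<inter> B = {\<xi>}"
    by (elim bexE conjE)
  then show ?thesis by (intro bexI[of _ \<xi>] conjI)
qed

lemma lab_char:
  assumes fin: "finite I" and uniq: "\<forall>A\<in>I. \<forall>B\<in>I. v \<in> A \<and> v \<in> B \<longrightarrow> A = B"
  shows "lab I v \<noteq> Sig" "\<And>A. A \<in> I \<Longrightarrow> v \<in> A \<longleftrightarrow> lab I v = Lt A"
    "lab I v = Eps \<or> (\<exists>A\<in>I. lab I v = Lt A)"
proof -
  have c: "\<not> 2 \<le> card {X\<in>I. v \<in> X}"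
  proof
    assume "2 \<le> card {X\<in>I. v \<in> X}"
    from card2_ex[OF this] show False using uniq by blast
  qed
  then have l: "lab I v = (if \<exists>X\<in>I. v \<in> X then Lt (THE X. X \<in> I \<and> v \<in> X) else Eps)"
    unfolding lab_def by simp
  have th: "(THE X. X \<in> I \<and> v \<in> X) = A" if "A \<in> I" "v \<in> A" for A
  proof (rule the_equality)
    show "A \<in> I \<and> v \<in> A" using that by simp
    fix X assume "X \<in> I \<and> v \<in> X"
    then show "X = A" using uniq that by metis
  qed
  show "lab I v \<noteq> Sig" using l by simp
  show "lab I v = Eps \<or> (\<exists>A\<in>I. lab I v = Lt A)"
  proof (cases "\<exists>X\<in>I. v \<in> X")
    case True
    then obtain X where "X \<in> I" "v \<in> X" by blast
    then show ?thesis using l th by auto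
  next
    case False then show ?thesis using l by simp
  qed
  fix A assume A: "A \<in> I"
  show "v \<in> A \<longleftrightarrow> lab I v = Lt A"
  proof
    assume "v \<in> A" then show "lab I v = Lt A" using l th A by auto
  next
    assume la: "lab I v = Lt A"
    have "\<exists>X\<in>I. v \<in> X"
    proof (rule ccontr)
      assume "\<not> (\<exists>X\<in>I. v \<in> X)"
      then have "lab I v = Eps" using l by simp
      then show False using la by simp
    qed
    then obtain X where X: "X \<in> I" "v \<in> X" by blast
    then have "lab I v = Lt X" using l th by auto
    then show "v \<in> A" using la X by simp
  qed
qed

lemma graph_facts:
  fixes V :: "'v set"
  assumes sun: "sunoid V E" and rim: "is_rim V E cyc" and S0: "lab (inscr V E) (cyc!0) = Sig"
  shows "(\<forall>x. proper x \<longrightarrow> even (count_list (map (lab (inscr V E)) (tl cyc)) x)) \<and>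
         H2P proper (map (lab (inscr V E)) (tl cyc)) \<and> Sig \<notin> set (map (lab (inscr V E)) (tl cyc))"
proof -
  define I where "I = inscr V E"
  define n where "n = length cyc"
  define xs where "xs = map (lab I) (tl cyc)"
  have dist: "distinct cyc" and setc: "set cyc = V" and n3: "3 \<le> n"
    using rim unfolding is_rim_def n_def by simp_all
  have fV: "finite V" using sun unfolding sunoid_def multisun_def sgraph_def by simp
  have oddV: "odd (card V)" using sun unfolding sunoid_def multisun_def by simp
  have oddn: "odd n" using oddV distinct_card[OF dist] setc unfolding n_def by simp
  have lxs: "length xs = n - 1" unfolding xs_def n_def by simp
  have xsn: "xs ! t = lab I (cyc ! Suc t)" if "t < n - 1" for t
    using that unfolding xs_def n_def by (simp add: nth_tl)
  have finI: "finite I"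
  proof -
    have "I \<subseteq> Pow V" unfolding I_def inscr_def maxclique_def clique_def by auto
    then show ?thesis using fV finite_subset by auto
  qed
  have "2 \<le> card {X\<in>I. cyc!0 \<in> X}"
  proof (rule ccontr)
    assume "\<not> 2 \<le> card {X\<in>I. cyc!0 \<in> X}"
    then have "lab I (cyc!0) \<noteq> Sig" unfolding lab_def by simp
    then show False using S0 unfolding I_def by simp
  qed
  from card2_ex[OF this] obtain A0 B0 where AB0: "A0 \<in> I" "B0 \<in> I" "A0 \<noteq> B0" "cyc!0 \<in> A0" "cyc!0 \<in> B0"
    by blast
  have Ine: "inscr V E \<noteq> {}" using AB0 unfolding I_def by blast
  have NI: "N_conds V I cyc" using fullN[OF sun rim Ine] unfolding I_def .
  from N3_of[OF NI] obtain \<xi> where xi: "\<xi> \<in> V" "\<forall>A\<in>I. \<xi> \<in> A" "\<forall>A\<in>I. \<forall>B\<in>I. A \<noteq> B \<longrightarrow> A \<inter> B = {\<xi>}"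
    by blast
  have c0: "cyc!0 = \<xi>"
  proof -
    have "A0 \<inter> B0 = {\<xi>}" using xi(3) AB0 by blast
    then show ?thesis using AB0 by blast
  qed
  have nxi: "cyc!t \<noteq> \<xi>" if "0 < t" "t < n" for t
  proof
    assume "cyc!t = \<xi>"
    then have "cyc!t = cyc!0" using c0 by simp
    moreover have "0 < length cyc" using n3 unfolding n_def by linarith
    ultimately have "t = 0" using nth_eq_iff_index_eq[OF dist] that unfolding n_def by blast
    then show False using that by simp
  qed
  have uniq: "\<forall>A\<in>I. \<forall>B\<in>I. cyc!t \<in> A \<and> cyc!t \<in> B \<longrightarrow> A = B" if "0 < t" "t < n" for t
  proof (intro ballI impI)
    fix A B assume AB: "A \<in> I" "B \<in> I" "cyc!t \<in> A \<and> cyc!t \<in> B"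
    show "A = B"
    proof (rule ccontr)
      assume "A \<noteq> B"
      then have "A \<inter> B = {\<xi>}" using xi(3) AB by blast
      then have "cyc!t = \<xi>" using AB by blast
      then show False using nxi that by simp
    qed
  qed
  have inA: "cyc!t \<in> A \<longleftrightarrow> lab I (cyc!t) = Lt A" if "0 < t" "t < n" "A \<in> I" for t A
    using lab_char(2)[OF finI uniq[OF that(1,2)] that(3)] .
  have labP: "\<exists>A\<in>I. lab I (cyc!t) = Lt A" if "0 < t" "t < n" "proper (lab I (cyc!t))" for t
    using lab_char(3)[OF finI uniq[OF that(1,2)]] that(3) unfolding proper_def by blast
  have sub: "N_conds V S cyc" if "S \<subseteq> I" "S \<noteq> {}" for S
    using subN[OF sun rim xi(3)[unfolded I_def] that[unfolded I_def]] .
  have single: "(\<forall>i<length xs. xs!i = Lt A \<longrightarrow> even (i + count_list (take i xs) (Lt A))) \<and>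
                even (count_list xs (Lt A))" if AI: "A \<in> I" for A
  proof -
    let ?x = "Lt A"
    have NA: "N_conds V {A} cyc" using sub AI by simp
    have notA: "cyc!t \<notin> \<Union>{A}" if "0 < t" "t < n" "xs!(t - 1) \<noteq> ?x" for t
    proof -
      have "xs!(t-1) = lab I (cyc!t)" using xsn[of "t-1"] that by simp
      then show ?thesis using inA[OF that(1,2) AI] that(3) by simp
    qed
    have isA: "cyc!(Suc t) \<in> A" if "t < n - 1" "xs!t = ?x" for t
      using inA[of "Suc t" A] xsn[OF that(1)] that AI by simp
    have pa: "\<forall>i<length xs. xs!i = ?x \<and> (\<forall>t<i. xs!t \<noteq> ?x) \<longrightarrow> even i"
    proof (intro allI impI)
      fix i assume h: "i < length xs" "xs!i = ?x \<and> (\<forall>t<i. xs!t \<noteq> ?x)"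
      have "end_path {A} cyc A A 0 (Suc i - 0 + 1)"
      proof (rule mk_path)
        show "0 < Suc i" "Suc i \<le> length cyc" "Suc i - 0 < length cyc" using h lxs n_def by auto
        show "cyc ! 0 \<in> A" using c0 xi(2) AI by simp
        show "cyc ! (Suc i mod length cyc) \<in> A" using isA[of i] h lxs n_def by simp
        show "\<forall>t. 0 < t \<and> t < Suc i \<longrightarrow> cyc ! t \<notin> \<Union> {A}"
        proof (intro allI impI)
          fix t assume t: "0 < t \<and> t < Suc i"
          have "t - 1 < i" using t by linarith
          then have "xs!(t-1) \<noteq> ?x" using h by blast
          moreover have "t < n" using t h lxs by linarith
          ultimately show "cyc ! t \<notin> \<Union> {A}" using notA[of t] t by simp
        qed
      qed
      from N1_of[OF NA insertI1 this] show "even i" by simp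
    qed
    have pb: "\<forall>i j. i < j \<and> j < length xs \<and> xs!i = ?x \<and> xs!j = ?x \<and> (\<forall>t. i < t \<and> t < j \<longrightarrow> xs!t \<noteq> ?x) \<longrightarrow> odd (j - i)"
    proof (intro allI impI)
      fix i j assume h: "i < j \<and> j < length xs \<and> xs!i = ?x \<and> xs!j = ?x \<and> (\<forall>t. i < t \<and> t < j \<longrightarrow> xs!t \<noteq> ?x)"
      have "end_path {A} cyc A A (Suc i) (Suc j - Suc i + 1)"
      proof (rule mk_path)
        show "Suc i < Suc j" "Suc j \<le> length cyc" "Suc j - Suc i < length cyc" using h lxs n_def by auto
        show "cyc ! Suc i \<in> A" using isA[of i] h lxs by simp
        have m: "Suc j < length cyc" using h lxs n_def by linarith
        show "cyc ! (Suc j mod length cyc) \<in> A" using isA[of j] h lxs n_def m by simp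
        show "\<forall>t. Suc i < t \<and> t < Suc j \<longrightarrow> cyc ! t \<notin> \<Union> {A}"
        proof (intro allI impI)
          fix t assume t: "Suc i < t \<and> t < Suc j"
          have "xs!(t-1) \<noteq> ?x" using h t by (metis Suc_less_eq2 diff_Suc_1 less_Suc_eq_0_disj not_less_zero)
          moreover have "t < n" using t h lxs by linarith
          ultimately show "cyc ! t \<notin> \<Union> {A}" using notA[of t] t by simp
        qed
      qed
      from N1_of[OF NA insertI1 this] show "odd (j - i)" using h by simp
    qed
    have pc: "\<forall>i<length xs. xs!i = ?x \<and> (\<forall>t. i < t \<and> t < length xs \<longrightarrow> xs!t \<noteq> ?x) \<longrightarrow> odd (length xs - i)"
    proof (intro allI impI)
      fix i assume h: "i < length xs" "xs!i = ?x \<and> (\<forall>t. i < t \<and> t < length xs \<longrightarrow> xs!t \<noteq> ?x)"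
      have "end_path {A} cyc A A (Suc i) (n - Suc i + 1)"
      proof (rule mk_path)
        show "Suc i < n" "n \<le> length cyc" "n - Suc i < length cyc" using h lxs n_def by auto
        show "cyc ! Suc i \<in> A" using isA[of i] h lxs by simp
        show "cyc ! (n mod length cyc) \<in> A" using c0 xi(2) AI n_def by simp
        show "\<forall>t. Suc i < t \<and> t < n \<longrightarrow> cyc ! t \<notin> \<Union> {A}"
        proof (intro allI impI)
          fix t assume t: "Suc i < t \<and> t < n"
          have "t - 1 < length xs" using t lxs by linarith
          moreover have "i < t - 1" using t by linarith
          ultimately have "xs!(t-1) \<noteq> ?x" using h by blast
          then show "cyc ! t \<notin> \<Union> {A}" using notA[of t] t by simp
        qed
      qed
      from N1_of[OF NA insertI1 this] show "odd (length xs - i)" using h lxs by simp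
    qed
    have pd: "even (length xs)" using oddn lxs n3 by simp
    show ?thesis using list_parity[OF pa pb] list_even[OF pa pb pc pd] by blast
  qed
  have H1': "\<forall>x. proper x \<longrightarrow> even (count_list xs x)"
  proof (intro allI impI)
    fix x :: "'v letter" assume px: "proper x"
    show "even (count_list xs x)"
    proof (cases "x \<in> set xs")
      case False then show ?thesis by simp
    next
      case True
      then obtain t where t: "t < length xs" "xs!t = x" by (auto simp: in_set_conv_nth)
      then have "proper (lab I (cyc!(Suc t)))" using xsn px lxs by simp
      moreover have "Suc t < n" using t lxs by linarith
      ultimately obtain A where A: "A \<in> I" "lab I (cyc!(Suc t)) = Lt A" using labP[of "Suc t"] by auto
      have "t < n - 1" using t lxs by simp
      then have "x = Lt A" using A(2) xsn t(2) by simp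
      then show ?thesis using conjunct2[OF single[OF A(1)]] by simp
    qed
  qed
  have H2': "H2P proper xs"
    unfolding H2P_def
  proof (intro allI impI)
    fix a b c U V'
    assume w: "xs = a @ U # b @ V' # c" and UV: "U \<noteq> V'" and pU: "proper U" and pV: "proper V'"
      and nU: "U \<notin> set b" and nV: "V' \<notin> set b"
    define i0 where "i0 = length a"
    define j0 where "j0 = length a + 1 + length b"
    have ij: "i0 < j0" "j0 < length xs" unfolding i0_def j0_def using w by auto
    have xi0: "xs!i0 = U" unfolding i0_def using w by simp
    have sn: "Suc i0 < n" "Suc j0 < n" "i0 < n - 1" "j0 < n - 1" using ij lxs by linarith+
    have xj0: "xs!j0 = V'" unfolding j0_def using w by (simp add: nth_append)
    have mid: "xs!t \<in> set b" if "i0 < t" "t < j0" for t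
    proof -
      have k: "t - Suc i0 < length b" "\<not> t < length (a @ [U])" "t - length (a @ [U]) = t - Suc i0"
        using that unfolding i0_def j0_def by auto
      have w2: "xs = (a @ [U]) @ (b @ V' # c)" using w by simp
      have "xs!t = (b @ V' # c)!(t - Suc i0)" unfolding w2 nth_append using k(2,3) by simp
      also have "\<dots> = b!(t - Suc i0)" using k(1) by (simp add: nth_append)
      finally show ?thesis using k(1) by simp
    qed
    obtain A where A: "A \<in> I" "lab I (cyc!(Suc i0)) = Lt A"
      using labP[of "Suc i0"] xsn[of i0] xi0 pU sn by auto
    obtain B where B: "B \<in> I" "lab I (cyc!(Suc j0)) = Lt B"
      using labP[of "Suc j0"] xsn[of j0] xj0 pV sn by auto
    have UA: "U = Lt A" using A xsn[of i0] xi0 sn by simp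
    have VB: "V' = Lt B" using B xsn[of j0] xj0 sn by simp
    have AB: "A \<noteq> B" using UA VB UV by simp
    have NAB: "N_conds V {A, B} cyc" using sub A(1) B(1) by simp
    have "end_path {A,B} cyc (A - B) (B - A) (Suc i0) (Suc j0 - Suc i0 + 1)"
    proof (rule mk_path)
      show "Suc i0 < Suc j0" "Suc j0 \<le> length cyc" "Suc j0 - Suc i0 < length cyc" using ij lxs n_def by auto
      have "cyc!(Suc i0) \<in> A" using inA[of "Suc i0" A] A sn by simp
      moreover have "cyc!(Suc i0) \<notin> B" using inA[of "Suc i0" B] A B sn AB by simp
      ultimately show "cyc ! Suc i0 \<in> A - B" by simp
      have "cyc!(Suc j0) \<in> B" using inA[of "Suc j0" B] B sn by simp
      moreover have "cyc!(Suc j0) \<notin> A" using inA[of "Suc j0" A] A B sn AB by simp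
      moreover have "Suc j0 mod length cyc = Suc j0" using sn n_def by simp
      ultimately show "cyc ! (Suc j0 mod length cyc) \<in> B - A" by simp
      show "\<forall>t. Suc i0 < t \<and> t < Suc j0 \<longrightarrow> cyc ! t \<notin> \<Union> {A, B}"
      proof (intro allI impI)
        fix t assume t: "Suc i0 < t \<and> t < Suc j0"
        have tt: "0 < t" "t < n" using t sn by linarith+
        have "i0 < t - 1" "t - 1 < j0" using t by linarith+
        then have "xs!(t-1) \<in> set b" using mid[of "t-1"] by simp
        then have "lab I (cyc!t) \<noteq> Lt A" "lab I (cyc!t) \<noteq> Lt B"
          using xsn[of "t-1"] tt nU nV UA VB by auto
        then show "cyc ! t \<notin> \<Union> {A, B}" using inA[OF tt A(1)] inA[OF tt B(1)] by simp
      qed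
    qed
    from N5_of[OF NAB _ _ AB this] have ok: "odd (Suc j0 - Suc i0 + 1)" by simp
    have pA: "even (i0 + count_list (take i0 xs) U)" using single[OF A(1)] ij xi0 UA by simp
    have pB: "even (j0 + count_list (take j0 xs) V')" using single[OF B(1)] ij xj0 VB by simp
    have t1: "take i0 xs = a" unfolding i0_def using w by simp
    have t2: "take j0 xs = a @ U # b" unfolding j0_def using w by simp
    have "count_list (take j0 xs) V' = count_list a V'" using t2 nV UV by simp
    then have e2: "even (length a + 1 + length b + count_list a V')" using pB unfolding j0_def by simp
    have e1: "even (length a + count_list a U)" using pA t1 unfolding i0_def by simp
    have e3: "odd (length b + 2)" using ok unfolding i0_def j0_def by simp
    show "even (count_list a U + count_list a V')" using e1 e2 e3 by presburger
  qed
  have nS: "Sig \<notin> set xs"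
  proof
    assume "Sig \<in> set xs"
    then obtain t where t: "t < length xs" "xs!t = Sig" by (auto simp: in_set_conv_nth)
    have tt: "0 < Suc t" "Suc t < n" "t < n - 1" using t lxs by linarith+
    have "lab I (cyc!(Suc t)) \<noteq> Sig" using lab_char(1)[OF finI uniq[OF tt(1,2)]] .
    then show False using xsn[OF tt(3)] t(2) by simp
  qed
  show ?thesis using H1' H2' nS unfolding xs_def I_def by simp
qed

lemma pat_cons_ne: "x \<noteq> Eps \<Longrightarrow> pat (x # xs) = x # pat xs"
  by (cases x) simp_all

lemma pat_eps_ne: "y \<noteq> Eps \<Longrightarrow> pat (Eps # y # ys) = Eps # pat (y # ys)"
  by (cases y) simp_all

lemma pat_filter: "filter proper (pat w) = filter proper w"
  by (induction w rule: pat.induct) (auto simp: proper_def)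

lemma set_pat: "set (pat w) \<subseteq> set w"
  by (induction w rule: pat.induct) auto

lemma pat_rep_app: "x \<noteq> Eps \<Longrightarrow> pat (replicate l x @ ys) = replicate l x @ pat ys"
  by (induction l) (simp_all add: pat_cons_ne)

lemma blocks_hd: "0 < l \<Longrightarrow> \<exists>t. blocks ((x, l) # bs) = x # t"
  by (cases bs; cases l) auto

lemma pat_blocks: "\<forall>(x,l)\<in>set bs. proper x \<and> 0 < l \<Longrightarrow> pat (blocks bs) = blocks bs"
proof (induction bs rule: blocks.induct)
  case 1 then show ?case by simp
next
  case (2 x l)
  then have "x \<noteq> Eps" by (simp add: proper_def)
  then show ?case using pat_rep_app[of x l "[]"] by simp
next
  case (3 x l b bs)
  have xE: "x \<noteq> Eps" using 3(2) by (simp add: proper_def)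
  obtain y l' where b: "b = (y, l')" by fastforce
  have "0 < l'" "proper y" using 3(2) b by auto
  then obtain t where t: "blocks (b # bs) = y # t" and yE: "y \<noteq> Eps"
    using blocks_hd[of l' y bs] b by (auto simp: proper_def)
  have IH: "pat (blocks (b # bs)) = blocks (b # bs)" using 3 by simp
  have "pat (Eps # blocks (b # bs)) = Eps # pat (blocks (b # bs))"
    using t pat_eps_ne[OF yE] by simp
  then show ?case using pat_rep_app[OF xE] IH by simp
qed

lemma set_blocks: "set (blocks bs) \<subseteq> insert Eps (fst ` set bs)"
  by (induction bs rule: blocks.induct) auto

lemma rot_unique:
  assumes xs: "xs = u @ y # v" and nu: "y \<notin> set u" and nv: "y \<notin> set v" and r: "rotate k xs = y # t"
  shows "t = v @ u"
proof -
  define m where "m = k mod length xs"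
  have lpos: "0 < length xs" using xs by simp
  have mlt: "m < length xs" unfolding m_def using lpos by simp
  have rm: "rotate k xs = drop m xs @ take m xs" unfolding m_def by (rule rotate_drop_take)
  have "drop m xs = xs ! m # drop (Suc m) xs" using mlt by (simp add: Cons_nth_drop_Suc)
  then have xm: "xs ! m = y" using r rm by simp
  have mu: "m = length u"
  proof (rule ccontr)
    assume "m \<noteq> length u"
    then consider "m < length u" | "length u < m" by linarith
    then show False
    proof cases
      case 1
      then have "xs ! m = u ! m" using xs by (simp add: nth_append)
      then show False using xm nu 1 by (metis nth_mem)
    next
      case 2
      then have "xs ! m = v ! (m - Suc (length u))" using xs by (simp add: nth_append)
      moreover have "m - Suc (length u) < length v" using 2 mlt xs by simp
      ultimately show False using xm nv by (metis nth_mem)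
    qed
  qed
  have "drop m xs = y # v" "take m xs = u" using xs mu by simp_all
  then show ?thesis using r rm by simp
qed

theorem theorem4:
  fixes W :: "'v letter list set"
  assumes "sunword W"
  shows "jump_free W"
proof -
  obtain V :: "'v set" and E where sun: "sunoid V E" and W: "W = sword V E"
    using assms unfolding sunword_def by blast
  show ?thesis unfolding jump_free_def Let_def
  proof (rule ballI, rule allI, rule impI)
    fix r bs
    assume rW: "r \<in> W" and rb: "r = Sig # blocks bs \<and> (\<forall>(x, l)\<in>set bs. proper x \<and> 0 < l)"
    have r: "r = Sig # blocks bs" and pr: "\<forall>(x, l)\<in>set bs. proper x \<and> 0 < l" using rb by auto
    let ?I = "inscr V E"
    obtain cyc where rim: "is_rim V E cyc"
      and hdS: "(\<exists>v\<in>V. lab ?I v = Sig) \<longrightarrow> lab ?I (hd cyc) = Sig"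
      and wa: "wapprox (map (lab ?I) cyc) r"
      using rW unfolding W sword_def by blast
    let ?w = "map (lab ?I) cyc"
    have pr_r: "pat r = r" using pat_blocks[OF pr] r by (simp add: pat_cons_ne)
    obtain k where rk: "r = rotate k (pat ?w) \<or> r = rotate k (rev (pat ?w))"
      using wa unfolding wapprox_def wsim_def pr_r by blast
    have "Sig \<in> set r" using r by simp
    then have "Sig \<in> set (pat ?w)" using rk by auto
    then have "Sig \<in> set ?w" using set_pat by blast
    then obtain v where v: "v \<in> set cyc" "lab ?I v = Sig" by auto
    have "set cyc = V" using rim unfolding is_rim_def by simp
    then have "\<exists>v\<in>V. lab ?I v = Sig" using v by blast
    then have S0': "lab ?I (hd cyc) = Sig" using hdS by blast
    have cne: "cyc \<noteq> []" using rim unfolding is_rim_def by auto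
    then obtain c0 ct where cc: "cyc = c0 # ct" by (cases cyc) auto
    have S0: "lab ?I (cyc!0) = Sig" using S0' cc by simp
    have GF: "(\<forall>x. proper x \<longrightarrow> even (count_list (map (lab ?I) (tl cyc)) x)) \<and>
         H2P proper (map (lab ?I) (tl cyc)) \<and> Sig \<notin> set (map (lab ?I) (tl cyc))"
      using graph_facts[OF sun rim S0] .
    define q where "q = pat (map (lab ?I) ct)"
    have w0: "?w = Sig # map (lab ?I) ct" using cc S0' by simp
    have pw: "pat ?w = Sig # q" unfolding w0 q_def by (simp add: pat_cons_ne)
    have nSq: "Sig \<notin> set q"
    proof
      assume "Sig \<in> set q"
      then have "Sig \<in> set (map (lab ?I) ct)" using set_pat unfolding q_def by blast
      then show False using GF cc by simp
    qed
    have nSb: "Sig \<notin> set (blocks bs)"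
    proof
      assume "Sig \<in> set (blocks bs)"
      then have "Sig \<in> fst ` set bs" using set_blocks by fastforce
      then obtain l where "(Sig, l) \<in> set bs" by auto
      then show False using pr unfolding proper_def by auto
    qed
    have H1c: "H1 (filter proper (map (lab ?I) ct))" using GF cc H1_filter by auto
    have H2c: "H2 (filter proper (map (lab ?I) ct))" using GF cc H2_filter by auto
    have fq: "filter proper q = filter proper (map (lab ?I) ct)" unfolding q_def by (rule pat_filter)
    have HH: "H1 (filter proper (blocks bs)) \<and> H2 (filter proper (blocks bs))"
    proof (cases "r = rotate k (pat ?w)")
      case True
      then have "rotate k ([] @ Sig # q) = Sig # blocks bs" using r pw by simp
      then have "blocks bs = q @ []" by (rule rot_unique[OF refl _ nSq, rotated]) simp
      then show ?thesis using H1c H2c fq by simp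
    next
      case False
      then have rr: "r = rotate k (rev (pat ?w))" using rk by blast
      then have "rotate k (rev q @ Sig # []) = Sig # blocks bs" using r pw by simp
      then have "blocks bs = [] @ rev q" by (rule rot_unique[OF refl _ _, rotated 2]) (use nSq in simp_all)
      then have "filter proper (blocks bs) = rev (filter proper q)" by (simp add: rev_filter)
      then have fb: "filter proper (blocks bs) = rev (filter proper (map (lab ?I) ct))"
        unfolding fq .
      have "H1 (rev (filter proper (map (lab ?I) ct)))" using H1c unfolding H1_def by simp
      moreover have "H2 (rev (filter proper (map (lab ?I) ct)))" using H2_rev[OF H1c H2c] .
      ultimately show ?thesis using fb by simp
    qed
    have main: "\<forall>h \<le> length bs. cover_pair (Sig # blocks bs) ((Sig # map fst bs)!h)
            ((Sig # map fst bs)!((h+1) mod (length bs+1)))"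
      using comb_main[OF pr] HH by blast
    show "\<forall>h\<le>length bs. cover_pair r ((Sig # map fst bs) ! h) ((Sig # map fst bs) ! ((h + 1) mod (length bs + 1)))"
      using main r by simp
  qed
qed

end
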